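(* Let $\mathcal X$ be a compact set in a normed space (dual norm $\|\cdot\|_*$), let $w_n>0$, and let each $l_n$ be differentiable and $\mu_n$-strongly convex for some $\mu_n\ge0$, with $\sum_{m=1}^nw_m\mu_m>0$ for all $n$. In round $n$ let $v_{n+1}$ be a differentiable (possibly nonconvex) function such that $\sum_{m=1}^nw_ml_m+w_{n+1}v_{n+1}$ is convex, and suppose the learner plays $x_{n+1}\in\operatorname{arg\,min}_{x\in\mathcal X}\big(\sum_{m=1}^nw_ml_m+w_{n+1}v_{n+1}\big)(x)$ (with $x_1\in\operatorname{arg\,min}_{\mathcal X}v_1$, $v_1$ convex). Then $$\mathrm{regret}^w(\mathcal X):=\sum_{n=1}^Nw_nl_n(x_n)-\min_{x\in\mathcal X}\sum_{n=1}^Nw_nl_n(x)\le\sum_{n=1}^N\frac{w_n^2\|\nabla l_n(x_n)-\nabla v_n(x_n)\|_*^2}{2\sum_{m=1}^nw_m\mu_m}.$$ In particular, if $\mu_n=\mu>0$ and $w_n=n^p$ with $p\ge0$, then $\mathrm{regret}^w(\mathcal X)\le\frac{p+1}{2\mu}\sum_{n=1}^Nn^{p-1}\|\nabla l_n(x_n)-\nabla v_n(x_n)\|_*^2$.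
   Formalization: The set $\mathcal X$ is convex as well as compact. The paper assumes this as well. *)

theory Defs
  imports "HOL-Analysis.Analysis"
begin

definition strongly_convex_on :: "'a::real_normed_vector set \<Rightarrow> real \<Rightarrow> ('a \<Rightarrow> real) \<Rightarrow> bool" where
  "strongly_convex_on S mu f \<longleftrightarrow>
     (\<forall>x\<in>S. \<forall>y\<in>S. \<forall>t::real. 0 \<le> t \<and> t \<le> 1 \<longrightarrow>
        f ((1 - t) *\<^sub>R x + t *\<^sub>R y)
          \<le> (1 - t) * f x + t * f y - mu / 2 * t * (1 - t) * (norm (x - y))\<^sup>2)"

text \<open>Dual norm of a (bounded linear) functional, i.e. of a gradient given as its
  Frechet derivative: the operator norm.\<close>
definition dual_norm :: "('a::real_normed_vector \<Rightarrow> real) \<Rightarrow> real" where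
  "dual_norm g = onorm g"

end

theory Submission
  imports Defs
begin

lemma powr_sum_bound:
  fixes p :: real assumes p: "p \<ge> 0"
  shows "real n powr (p+1) \<le> (p+1) * (\<Sum>m=1..n. real m powr p)"
proof (induction n)
  case 0 then show ?case by simp
next
  case (Suc n)
  have step: "real (Suc n) powr (p+1) - real n powr (p+1) \<le> (p+1) * real (Suc n) powr p"
  proof (cases "n = 0")
    case True then show ?thesis using p by simp
  next
    case False
    then have n0: "real n > 0" by simp
    have "\<exists>z. real n < z \<and> z < real (Suc n) \<and>
      real (Suc n) powr (p+1) - real n powr (p+1) = (real (Suc n) - real n) * ((p+1) * z powr (p+1-1))"
      apply (rule MVT2)
       apply simp
      subgoal for y using has_real_derivative_powr[of y "p+1"] n0 by simp
      done
    then obtain z where z: "real n < z" "z < real (Suc n)"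
      "real (Suc n) powr (p+1) - real n powr (p+1) = (p+1) * z powr p" by auto
    have "z powr p \<le> real (Suc n) powr p" using z n0 p by (intro powr_mono2) auto
    then show ?thesis using z p by (simp add: mult_left_mono)
  qed
  show ?case using Suc step by (simp add: algebra_simps)
qed

lemma dir_limit:
  fixes H :: "'a::real_normed_vector \<Rightarrow> real"
  assumes "(H has_derivative H') (at x)"
  shows "((\<lambda>t. (H (x + t *\<^sub>R d) - H x) / t) \<longlongrightarrow> H' d) (at_right 0)"
proof -
  have lin: "bounded_linear H'" using assms by (rule has_derivative_bounded_linear)
  have inner: "((\<lambda>t::real. x + t *\<^sub>R d) has_derivative (\<lambda>s. s *\<^sub>R d)) (at 0)"
    by (auto intro!: derivative_eq_intros)
  have "((\<lambda>t. H (x + t *\<^sub>R d)) has_derivative (\<lambda>s. H' (s *\<^sub>R d))) (at 0)"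
    using has_derivative_compose[OF inner] assms by simp
  moreover have "(\<lambda>s. H' (s *\<^sub>R d)) = (\<lambda>s. s * H' d)"
    using linear_scale[OF bounded_linear.linear[OF lin]] by auto
  ultimately have "((\<lambda>t. H (x + t *\<^sub>R d)) has_field_derivative H' d) (at 0)"

  proof -
    assume a: "((\<lambda>t. H (x + t *\<^sub>R d)) has_derivative (\<lambda>s. H' (s *\<^sub>R d))) (at 0)"
       and b: "(\<lambda>s. H' (s *\<^sub>R d)) = (\<lambda>s. s * H' d)"
    have c: "(\<lambda>s. s * H' d) = (*) (H' d)" by (auto simp: fun_eq_iff)
    show ?thesis unfolding has_field_derivative_def using a unfolding b c .
  qed
  then have "((\<lambda>t. H (x + t *\<^sub>R d)) has_field_derivative H' d) (at 0 within {0<..})"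
    by (rule has_field_derivative_at_within)
  then show ?thesis by (simp add: has_field_derivative_iff)
qed

lemma quad_bound:
  fixes a r c :: real assumes "c > 0"
  shows "0 - a^2 / (2*c) \<le> 0 - a * r + c/2 * r^2"
proof -
  have "0 \<le> (c*r - a)^2" by simp
  then have "0 \<le> c^2*r^2 - 2*c*a*r + a^2" by (simp add: power2_eq_square algebra_simps)
  then have "0 \<le> (c^2*r^2 - 2*c*a*r + a^2) / (2*c)" using assms by simp
  also have "(c^2*r^2 - 2*c*a*r + a^2) / (2*c) = (0 - a * r + c/2 * r^2) + a^2/(2*c)"
    using assms by (simp add: field_simps power2_eq_square)
  finally show ?thesis by linarith
qed
theorem lemma17:
  fixes X :: "'a::real_normed_vector set"
    and l v :: "nat \<Rightarrow> 'a \<Rightarrow> real"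
    and L V :: "nat \<Rightarrow> 'a \<Rightarrow> 'a \<Rightarrow> real"
    and w \<mu> :: "nat \<Rightarrow> real"
    and x :: "nat \<Rightarrow> 'a"
    and N :: nat
  assumes X_compact: "compact X"
    and X_convex: "convex X"
    and w_pos: "\<And>n. n \<ge> 1 \<Longrightarrow> w n > 0"
    and mu_nonneg: "\<And>n. n \<ge> 1 \<Longrightarrow> \<mu> n \<ge> 0"
    and l_sc: "\<And>n. n \<ge> 1 \<Longrightarrow> strongly_convex_on X (\<mu> n) (l n)"
    and l_deriv: "\<And>n y. n \<ge> 1 \<Longrightarrow> y \<in> X \<Longrightarrow> (l n has_derivative L n y) (at y)"
    and v_deriv: "\<And>n y. n \<ge> 1 \<Longrightarrow> y \<in> X \<Longrightarrow> (v n has_derivative V n y) (at y)"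
    and sum_mu_pos: "\<And>n. n \<ge> 1 \<Longrightarrow> (\<Sum>m=1..n. w m * \<mu> m) > 0"
    and v1_convex: "convex_on X (v 1)"
    and x1: "x 1 \<in> X" "\<And>y. y \<in> X \<Longrightarrow> v 1 (x 1) \<le> v 1 y"
    and F_convex: "\<And>n. n \<ge> 1 \<Longrightarrow>
        convex_on X (\<lambda>y. (\<Sum>m=1..n. w m * l m y) + w (Suc n) * v (Suc n) y)"
    and x_next: "\<And>n. n \<ge> 1 \<Longrightarrow> x (Suc n) \<in> X"
    and x_next_min: "\<And>n y. n \<ge> 1 \<Longrightarrow> y \<in> X \<Longrightarrow>
        (\<Sum>m=1..n. w m * l m (x (Suc n))) + w (Suc n) * v (Suc n) (x (Suc n))
          \<le> (\<Sum>m=1..n. w m * l m y) + w (Suc n) * v (Suc n) y"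
  shows "(\<Sum>n=1..N. w n * l n (x n)) - (INF y\<in>X. \<Sum>n=1..N. w n * l n y)
           \<le> (\<Sum>n=1..N. (w n)\<^sup>2 * (dual_norm (\<lambda>h. L n (x n) h - V n (x n) h))\<^sup>2
                            / (2 * (\<Sum>m=1..n. w m * \<mu> m)))
       \<and> (\<forall>\<mu>0 p::real. \<mu>0 > 0 \<and> p \<ge> 0 \<and> (\<forall>n\<ge>1. \<mu> n = \<mu>0 \<and> w n = real n powr p) \<longrightarrow>
            (\<Sum>n=1..N. w n * l n (x n)) - (INF y\<in>X. \<Sum>n=1..N. w n * l n y)
              \<le> (p + 1) / (2 * \<mu>0) *
                 (\<Sum>n=1..N. real n powr (p - 1) * (dual_norm (\<lambda>h. L n (x n) h - V n (x n) h))\<^sup>2))"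
  proof -
  define S where "S n z = (\<Sum>m=1..n. w m * l m z)" for n z
  define \<sigma> where "\<sigma> n = (\<Sum>m=1..n. w m * \<mu> m)" for n
  define g where "g n = (\<lambda>h. L n (x n) h - V n (x n) h)" for n
  define b where "b n = (w n)\<^sup>2 * (dual_norm (g n))\<^sup>2 / (2 * \<sigma> n)" for n
  have Xne: "X \<noteq> {}" using x1 by auto
  have xX: "x n \<in> X" if "n \<ge> 1" for n
  proof (cases n)
    case 0 then show ?thesis using that by simp
  next
    case (Suc k) then show ?thesis
      using x1(1) x_next[of k] by (cases k) auto
  qed
  have sc: "S n ((1 - t) *\<^sub>R y + t *\<^sub>R z)
      \<le> (1 - t) * S n y + t * S n z - \<sigma> n / 2 * t * (1 - t) * (norm (y - z))\<^sup>2"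
    if "y \<in> X" "z \<in> X" "0 \<le> t" "t \<le> 1" for n y z t
  proof -
    have "S n ((1 - t) *\<^sub>R y + t *\<^sub>R z) \<le> (\<Sum>m=1..n. w m * ((1 - t) * l m y + t * l m z
          - \<mu> m / 2 * t * (1 - t) * (norm (y - z))\<^sup>2))"
      unfolding S_def
    proof (rule sum_mono)
      fix m assume m: "m \<in> {1..n}"
      then have "m \<ge> 1" by simp
      have "l m ((1 - t) *\<^sub>R y + t *\<^sub>R z) \<le> (1 - t) * l m y + t * l m z
          - \<mu> m / 2 * t * (1 - t) * (norm (y - z))\<^sup>2"
        using l_sc[OF \<open>m \<ge> 1\<close>] that unfolding strongly_convex_on_def by blast
      then show "w m * l m ((1 - t) *\<^sub>R y + t *\<^sub>R z) \<le> w m * ((1 - t) * l m y + t * l m z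
          - \<mu> m / 2 * t * (1 - t) * (norm (y - z))\<^sup>2)"
        using w_pos[OF \<open>m \<ge> 1\<close>] by (intro mult_left_mono) auto
    qed
    also have "\<dots> = (1 - t) * S n y + t * S n z - \<sigma> n / 2 * t * (1 - t) * (norm (y - z))\<^sup>2"
    proof -
      define K where "K = t * (1 - t) * (norm (y - z))\<^sup>2 / 2"
      have e: "w m * ((1 - t) * l m y + t * l m z - \<mu> m / 2 * t * (1 - t) * (norm (y - z))\<^sup>2)
          = (1 - t) * (w m * l m y) + t * (w m * l m z) - (w m * \<mu> m) * K" for m
        unfolding K_def by (simp add: algebra_simps)
      have "(\<Sum>m=1..n. (1 - t) * (w m * l m y) + t * (w m * l m z) - (w m * \<mu> m) * K)
          = (\<Sum>m=1..n. (1 - t) * (w m * l m y)) + (\<Sum>m=1..n. t * (w m * l m z)) - (\<Sum>m=1..n. (w m * \<mu> m) * K)"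
        by (simp only: sum.distrib sum_subtractf)
      also have "\<dots> = (1 - t) * S n y + t * S n z - \<sigma> n * K"
        unfolding S_def \<sigma>_def by (simp only: sum_distrib_left sum_distrib_right)
      also have "\<sigma> n * K = \<sigma> n / 2 * t * (1 - t) * (norm (y - z))\<^sup>2"
        unfolding K_def by simp
      finally show ?thesis unfolding e .
    qed
    finally show ?thesis .
  qed
  have round: "S n (x n) - S n y \<le> b n" if n1: "n \<ge> 1" and yX: "y \<in> X" for n y
  proof -
    obtain k where k: "n = Suc k" using n1 by (cases n) auto
    define F where "F z = S k z + w n * v n z" for z
    define H where "H z = w n * (l n z - v n z)" for z
    have SFH: "S n z = F z + H z" for z
      unfolding S_def F_def H_def k by (simp add: algebra_simps)
    have Fmin: "F (x n) \<le> F z" if "z \<in> X" for z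
    proof (cases "k = 0")
      case True
      then show ?thesis using x1(2)[OF that] w_pos[of 1] k unfolding F_def S_def
        by (simp add: mult_left_mono)
    next
      case False
      then show ?thesis using x_next_min[of k z] that k unfolding F_def S_def by simp
    qed
    have xn: "x n \<in> X" using xX n1 .
    have Hd: "(H has_derivative (\<lambda>h. w n * g n h)) (at (x n))"
      unfolding H_def g_def
      using l_deriv[OF n1 xn] v_deriv[OF n1 xn]
      by (auto intro!: derivative_eq_intros)
    define d where "d = y - x n"
    have lim1: "((\<lambda>t. (H (x n + t *\<^sub>R d) - H (x n)) / t) \<longlongrightarrow> w n * g n d) (at_right 0)"
      using dir_limit[OF Hd] .
    have lim2: "((\<lambda>t. S n y - S n (x n) - \<sigma> n / 2 * (1 - t) * (norm d)\<^sup>2) \<longlongrightarrow>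
        S n y - S n (x n) - \<sigma> n / 2 * (1 - 0) * (norm d)\<^sup>2) (at_right 0)"
      by (intro tendsto_intros)
    have ev: "eventually (\<lambda>t. (H (x n + t *\<^sub>R d) - H (x n)) / t \<le>
        S n y - S n (x n) - \<sigma> n / 2 * (1 - t) * (norm d)\<^sup>2) (at_right 0)"
      unfolding eventually_at_right_field
    proof (rule exI[of _ 1], intro conjI allI impI)
      fix t :: real assume t0: "t > 0" and t1: "t < 1"
      have eq: "x n + t *\<^sub>R d = (1 - t) *\<^sub>R x n + t *\<^sub>R y"
        unfolding d_def by (simp add: algebra_simps)
      have inX: "x n + t *\<^sub>R d \<in> X"
        unfolding eq using X_convex xn yX t0 t1 by (simp add: convex_def)
      have "H (x n + t *\<^sub>R d) - H (x n) \<le> S n (x n + t *\<^sub>R d) - S n (x n)"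
        using Fmin[OF inX] SFH by simp
      also have "\<dots> \<le> t * (S n y - S n (x n)) - \<sigma> n / 2 * t * (1 - t) * (norm d)\<^sup>2"
        using sc[OF xn yX, of t] t0 t1 unfolding eq d_def
        by (simp add: norm_minus_commute algebra_simps)
      finally have "H (x n + t *\<^sub>R d) - H (x n) \<le>
          t * (S n y - S n (x n) - \<sigma> n / 2 * (1 - t) * (norm d)\<^sup>2)"
        by (simp add: algebra_simps)
      then show "(H (x n + t *\<^sub>R d) - H (x n)) / t \<le>
        S n y - S n (x n) - \<sigma> n / 2 * (1 - t) * (norm d)\<^sup>2"
        using t0 by (simp add: divide_le_eq mult.commute)
    qed simp
    have key: "w n * g n d \<le> S n y - S n (x n) - \<sigma> n / 2 * (norm d)\<^sup>2"
      using tendsto_le[OF _ lim2 lim1 ev] by simp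
    have bl: "bounded_linear (g n)"
      unfolding g_def
      using has_derivative_bounded_linear[OF l_deriv[OF n1 xn]]
            has_derivative_bounded_linear[OF v_deriv[OF n1 xn]]
      by (intro bounded_linear_sub)
    have "\<bar>g n d\<bar> \<le> dual_norm (g n) * norm d"
      using onorm[OF bl, of d] unfolding dual_norm_def by simp
    then have a1: "w n * \<bar>g n d\<bar> \<le> w n * (dual_norm (g n) * norm d)"
      using w_pos[OF n1] by (intro mult_left_mono) auto
    have a2: "w n * (- \<bar>g n d\<bar>) \<le> w n * g n d"
      using w_pos[OF n1] by (intro mult_left_mono) auto
    have a3: "- (w n * dual_norm (g n)) * norm d = - (w n * (dual_norm (g n) * norm d))"
      by (simp add: mult.assoc)
    have a4: "w n * (- \<bar>g n d\<bar>) = - (w n * \<bar>g n d\<bar>)" by simp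
    have "- (w n * dual_norm (g n)) * norm d \<le> w n * g n d"
      using a1 a2 a3 a4 by linarith
    moreover have spos: "\<sigma> n > 0" using sum_mu_pos[OF n1] unfolding \<sigma>_def .
    have "0 - (w n * dual_norm (g n))^2 / (2 * \<sigma> n) \<le>
       0 - (w n * dual_norm (g n)) * norm d + \<sigma> n / 2 * (norm d)^2"
      using quad_bound[OF spos] .
    ultimately have "S n (x n) - S n y \<le> (w n * dual_norm (g n))^2 / (2 * \<sigma> n)"
      using key minus_mult_left[of "w n * dual_norm (g n)" "norm d"] by linarith
    then show ?thesis unfolding b_def by (simp add: power_mult_distrib)
  qed
  have tele: "\<forall>y\<in>X. (\<Sum>n=1..M. w n * l n (x n)) - S M y \<le> (\<Sum>n=1..M. b n)" for M
  proof (induction M)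
    case 0 then show ?case by (simp add: S_def)
  next
    case (Suc M)
    show ?case
    proof
      fix y assume yX: "y \<in> X"
      have "(\<Sum>n=1..M. w n * l n (x n)) - S M (x (Suc M)) \<le> (\<Sum>n=1..M. b n)"
        using Suc xX[of "Suc M"] by simp
      moreover have "S (Suc M) (x (Suc M)) - S (Suc M) y \<le> b (Suc M)"
        using round[of "Suc M" y] yX by simp
      ultimately show "(\<Sum>n=1..Suc M. w n * l n (x n)) - S (Suc M) y \<le> (\<Sum>n=1..Suc M. b n)"
        unfolding S_def by simp
    qed
  qed
  have main: "(\<Sum>n=1..N. w n * l n (x n)) - (INF y\<in>X. \<Sum>n=1..N. w n * l n y) \<le> (\<Sum>n=1..N. b n)"
  proof -
    have "(\<Sum>n=1..N. w n * l n (x n)) - (\<Sum>n=1..N. b n) \<le> (INF y\<in>X. \<Sum>n=1..N. w n * l n y)"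
      using tele[of N] Xne unfolding S_def by (intro cINF_greatest) force+
    then show ?thesis by linarith
  qed
  show ?thesis
  proof (intro conjI allI impI)
    show "(\<Sum>n=1..N. w n * l n (x n)) - (INF y\<in>X. \<Sum>n=1..N. w n * l n y)
           \<le> (\<Sum>n=1..N. (w n)\<^sup>2 * (dual_norm (\<lambda>h. L n (x n) h - V n (x n) h))\<^sup>2
                            / (2 * (\<Sum>m=1..n. w m * \<mu> m)))"
      using main unfolding b_def g_def \<sigma>_def .
  next
    fix \<mu>0 p :: real
    assume H: "\<mu>0 > 0 \<and> p \<ge> 0 \<and> (\<forall>n\<ge>1. \<mu> n = \<mu>0 \<and> w n = real n powr p)"
    then have mu0: "\<mu>0 > 0" and p: "p \<ge> 0" and hmu: "\<And>n. n \<ge> 1 \<Longrightarrow> \<mu> n = \<mu>0"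
      and hw: "\<And>n. n \<ge> 1 \<Longrightarrow> w n = real n powr p" by auto
    have termb: "b n \<le> (p + 1) / (2 * \<mu>0) * (real n powr (p - 1) * (dual_norm (g n))\<^sup>2)"
      if n: "n \<in> {1..N}" for n
    proof -
      have n1: "n \<ge> 1" using n by simp
      define T where "T = (\<Sum>m=1..n. real m powr p)"
      define D where "D = (dual_norm (g n))\<^sup>2"
      have D0: "D \<ge> 0" unfolding D_def by simp
      have sig: "\<sigma> n = \<mu>0 * T" unfolding \<sigma>_def T_def sum_distrib_left
        by (rule sum.cong) (auto simp: hmu hw mult.commute)
      have Tpos: "T > 0" using sum_mu_pos[OF n1] sig mu0 unfolding \<sigma>_def
        by (simp add: zero_less_mult_iff)
      have PB: "real n powr (p+1) \<le> (p+1) * T" unfolding T_def by (rule powr_sum_bound[OF p])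
      have sq: "(real n powr p)\<^sup>2 = real n powr (p+1) * real n powr (p - 1)"
        using n1 by (simp add: power2_eq_square powr_add[symmetric])
      have "(real n powr p)\<^sup>2 * D \<le> (p+1) * T * real n powr (p - 1) * D"
        unfolding sq using PB D0 by (intro mult_right_mono) auto
      also have "\<dots> = (p + 1) / (2 * \<mu>0) * (real n powr (p - 1) * D) * (2 * \<sigma> n)"
        using mu0 unfolding sig by (simp add: field_simps)
      finally have "(real n powr p)\<^sup>2 * D / (2 * \<sigma> n) \<le> (p + 1) / (2 * \<mu>0) * (real n powr (p - 1) * D)"
        using mu0 Tpos sig by (simp add: pos_divide_le_eq)
      then show ?thesis unfolding b_def D_def using hw[OF n1] by simp
    qed
    have "(\<Sum>n=1..N. b n) \<le> (\<Sum>n=1..N. (p + 1) / (2 * \<mu>0) * (real n powr (p - 1) * (dual_norm (g n))\<^sup>2))"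
      by (rule sum_mono) (rule termb)
    also have "\<dots> = (p + 1) / (2 * \<mu>0) * (\<Sum>n=1..N. real n powr (p - 1) * (dual_norm (g n))\<^sup>2)"
      by (simp add: sum_distrib_left)
    finally show "(\<Sum>n=1..N. w n * l n (x n)) - (INF y\<in>X. \<Sum>n=1..N. w n * l n y)
              \<le> (p + 1) / (2 * \<mu>0) *
                 (\<Sum>n=1..N. real n powr (p - 1) * (dual_norm (\<lambda>h. L n (x n) h - V n (x n) h))\<^sup>2)"
      using main unfolding g_def by linarith
  qed
qed

end
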